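(* Let $\mathbf G$ and $\widetilde{\mathbf G}$ be finite oriented metric graphs, where $\widetilde{\mathbf G}$ is obtained from $\mathbf G$ by reversing the orientation of the edges in a subset $\mathcal J_-\subset\mathcal J$ (as described in the context), let $\Lambda$ be a linear relation in their common vertex space $\mathcal F$, let $D^{\Lambda_W}$ be the restriction of $D^{max}$ to $\{\Phi\in\widetilde H^1(\mathbf G;\mathbb C^2):(W\Gamma^1\Phi,W\Gamma^2\Phi)\in\Lambda\}$ and $\widetilde D^{\Lambda_{\widetilde W}}$ the restriction of $\widetilde D^{max}$ to $\{\widetilde\Phi\in\widetilde H^1(\widetilde{\mathbf G};\mathbb C^2):(\widetilde W\widetilde\Gamma^1\widetilde\Phi,\widetilde W\widetilde\Gamma^2\widetilde\Phi)\in\Lambda\}$. Then $$\widetilde D^{\Lambda_{\widetilde W}}P_{\mathcal J_-}=P_{\mathcal J_-}D^{\Lambda_W}.$$ In particular, $\widetilde D^{\Lambda_{\widetilde W}}$ and $D^{\Lambda_W}$ are unitarily equivalent.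
   Context: Let $m\ge0$. A finite oriented metric graph has a finite nonempty vertex set $\mathcal V$, finite sets $\mathcal I$ (internal) and $\mathcal E$ (external) of edges, $\mathcal J=\mathcal I\cup\mathcal E\ne\emptyset$, no loops. Each internal edge $i$ has initial vertex $\partial_-i$ and terminal vertex $\partial_+i$ and is identified with $I_i=(a_i,b_i)$, $a_i\leftrightarrow\partial_-i$, $b_i\leftrightarrow\partial_+i$. An external edge $e$ attached to a vertex is identified with $(a_e,+\infty)$ if the vertex is its initial vertex ($\rho(e)=-1$) or with $(-\infty,b_e)$ if it is its terminal vertex ($\rho(e)=1$); $\partial e$ is the finite endpoint. Data on a graph: $\mathscr H=\bigoplus_jL^2(I_j;\mathbb C^2)$; $\widetilde H^1=\bigoplus_jH^1(I_j;\mathbb C^2)$; $D^{max}$ acts edgewise by $-i\sigma_1\phi_j'+m\sigma_3\phi_j$ ($\sigma_1=\begin{pmatrix}0&1\\1&0\end{pmatrix}$, $\sigma_3=\operatorname{diag}(1,-1)$); $\mathcal G=\bigoplus_j\mathcal G_j$, $\mathcal G_i=\mathbb C^2$, $\mathcal G_e=\mathbb C$; $\Gamma^1_i\Phi=(\phi_i^1(a_i),\phi_i^1(b_i))^T$, $\Gamma^2_i\Phi=(i\phi_i^2(a_i),-i\phi_i^2(b_i))^T$, $\Gamma^1_e\Phi=\phi_e^1(\partial e)$, $\Gamma^2_e\Phi=-i\rho(e)\phi^2_e(\partial e)$, $\Gamma^k=\bigoplus_j\Gamma^k_j$; vertex space $\mathcal F=\bigoplus_v\mathbb C^{\deg v}$;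 coordinates of $\mathcal G$ and $\mathcal F$ are labelled by pairs $(j,v)$, $v$ a vertex endpoint of $j$; in $\mathcal G$ ordered edge by edge in a fixed edge order (for internal edges the pair with the initial vertex first), in $\mathcal F$ vertex by vertex in a fixed vertex order and within a vertex by the fixed edge order; $W:\mathcal G\to\mathcal F$ is the permutation matrix sending coordinate $(j,v)$ of $\mathcal G$ to coordinate $(j,v)$ of $\mathcal F$. The graph $\widetilde{\mathbf G}$ has the same vertices and edges (with the same fixed orders) but for $j\in\mathcal J_-$ the initial and terminal vertices are swapped; an edge $j\in\mathcal J_-$ with interval $(a,b)$ in $\mathbf G$ (where $a$ or $b$ may be infinite) gets the interval $(-b,-a)$ in $\widetilde{\mathbf G}$, while edges in $\mathcal J\setminus\mathcal J_-$ keep their intervals. $\widetilde{\mathscr H},\widetilde D^{max},\widetilde\Gamma^1,\widetilde\Gamma^2,\widetilde W$ are defined by the same rules for $\widetilde{\mathbf G}$ (so $\mathcal F$ and its ordering coincide, but in $\widetilde{\mathcal G}=\mathcal G$ the order of the two pairs belonging to an internal edge in $\mathcal J_-$ is swapped). $P_{\mathcal J_-}:\mathscr H\to\widetilde{\mathscr H}$ is $\bigoplus_jP_{\mathcal J_-,j}$ with $P_{\mathcal J_-,j}$ the identity for $j\notin\mathcal J_-$ and $(P_{\mathcal J_-,j}\phi)(\tilde x)=\sigma_3\phi(-\tilde x)$ for $j\in\mathcal J_-$. *)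

theory Defs
  imports "HOL-Analysis.Analysis"
begin

text \<open>The edge j is
identified with the open interval (lo j, hi j) (extended reals).  An external
edge is attached to ini e if it is (a_e, +infinity) (rho e = -1) and to ter e if it
is (-infinity, b_e) (rho e = 1); the other vertex field is unused.\<close>

record ('v, 'e) mgraph =
  verts  :: "'v set"
  iedges :: "'e set"
  eedges :: "'e set"
  ini    :: "'e \<Rightarrow> 'v"
  ter    :: "'e \<Rightarrow> 'v"
  lo     :: "'e \<Rightarrow> ereal"
  hi     :: "'e \<Rightarrow> ereal"

definition edges :: "('v, 'e) mgraph \<Rightarrow> 'e set" where
  "edges G = iedges G \<union> eedges G"

definition mgraph_wf :: "('v, 'e) mgraph \<Rightarrow> bool" where
  "mgraph_wf G \<longleftrightarrow>
     finite (verts G) \<and> verts G \<noteq> {} \<and> finite (iedges G) \<and> finite (eedges G) \<and>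
     iedges G \<inter> eedges G = {} \<and> edges G \<noteq> {} \<and>
     (\<forall>i\<in>iedges G. ini G i \<in> verts G \<and> ter G i \<in> verts G \<and> ini G i \<noteq> ter G i \<and>
        (\<exists>a b. lo G i = ereal a \<and> hi G i = ereal b \<and> a < b)) \<and>
     (\<forall>e\<in>eedges G.
        (ini G e \<in> verts G \<and> (\<exists>a. lo G e = ereal a) \<and> hi G e = \<infinity>) \<or>
        (ter G e \<in> verts G \<and> lo G e = -\<infinity> \<and> (\<exists>b. hi G e = ereal b)))"

definition rho :: "('v, 'e) mgraph \<Rightarrow> 'e \<Rightarrow> complex" where
  "rho G e = (if hi G e = \<infinity> then -1 else 1)"

definition edge_set :: "('v, 'e) mgraph \<Rightarrow> 'e \<Rightarrow> real set" where
  "edge_set G j = {x. lo G j < ereal x \<and> ereal x < hi G j}"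

definition aa :: "('v, 'e) mgraph \<Rightarrow> 'e \<Rightarrow> real" where
  "aa G j = real_of_ereal (lo G j)"

definition bb :: "('v, 'e) mgraph \<Rightarrow> 'e \<Rightarrow> real" where
  "bb G j = real_of_ereal (hi G j)"

definition rev_graph :: "('v, 'e) mgraph \<Rightarrow> 'e set \<Rightarrow> ('v, 'e) mgraph" where
  "rev_graph G Jm = G\<lparr> ini := (\<lambda>j. if j \<in> Jm then ter G j else ini G j),
                      ter := (\<lambda>j. if j \<in> Jm then ini G j else ter G j),
                      lo  := (\<lambda>j. if j \<in> Jm then - hi G j else lo G j),
                      hi  := (\<lambda>j. if j \<in> Jm then - lo G j else hi G j) \<rparr>"

definition L2_on :: "real set \<Rightarrow> (real \<Rightarrow> 'a::real_normed_vector) \<Rightarrow> bool" where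
  "L2_on I f \<longleftrightarrow> f \<in> borel_measurable (lebesgue_on I) \<and>
                 integrable (lebesgue_on I) (\<lambda>x. (norm (f x))\<^sup>2)"

text \<open>u is the continuous representative (extended continuously to the closure)
of an H^1 function on I with weak derivative g.\<close>
definition H1_rep :: "real set \<Rightarrow> (real \<Rightarrow> 'a::real_normed_vector) \<Rightarrow> (real \<Rightarrow> 'a) \<Rightarrow> bool" where
  "H1_rep I u g \<longleftrightarrow> continuous_on (closure I) u \<and> L2_on I u \<and> L2_on I g \<and>
     (\<forall>x\<in>I. \<forall>y\<in>I. x \<le> y \<longrightarrow> (g has_integral (u y - u x)) {x..y})"

text \<open>Edgewise Dirac expression  -i sigma_1 phi' + m sigma_3 phi  for phi = (p,q).\<close>
definition dirac :: "real \<Rightarrow> complex \<times> complex \<Rightarrow> complex \<times> complex \<Rightarrow> complex \<times> complex" where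
  "dirac m phi dphi = (- \<i> * snd dphi + complex_of_real m * fst phi,
                       - \<i> * fst dphi - complex_of_real m * snd phi)"

text \<open>Vectors in the vertex space F (and in G) are represented by their coordinates,
which are labelled by pairs (j,v), v a vertex endpoint of j; other labels carry 0.
W sends the coordinate (j,v) of G to the coordinate (j,v) of F, hence the following
maps are W Gamma^1 and W Gamma^2 written in labelled coordinates.\<close>

definition WGamma1 :: "('v, 'e) mgraph \<Rightarrow> ('e \<Rightarrow> real \<Rightarrow> complex \<times> complex) \<Rightarrow> ('e \<times> 'v \<Rightarrow> complex)" where
  "WGamma1 G U = (\<lambda>(j, v).
     if j \<in> iedges G \<and> v = ini G j then fst (U j (aa G j))
     else if j \<in> iedges G \<and> v = ter G j then fst (U j (bb G j))
     else if j \<in> eedges G \<and> rho G j = -1 \<and> v = ini G j then fst (U j (aa G j))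
     else if j \<in> eedges G \<and> rho G j = 1 \<and> v = ter G j then fst (U j (bb G j))
     else 0)"

definition WGamma2 :: "('v, 'e) mgraph \<Rightarrow> ('e \<Rightarrow> real \<Rightarrow> complex \<times> complex) \<Rightarrow> ('e \<times> 'v \<Rightarrow> complex)" where
  "WGamma2 G U = (\<lambda>(j, v).
     if j \<in> iedges G \<and> v = ini G j then \<i> * snd (U j (aa G j))
     else if j \<in> iedges G \<and> v = ter G j then - \<i> * snd (U j (bb G j))
     else if j \<in> eedges G \<and> rho G j = -1 \<and> v = ini G j then - \<i> * rho G j * snd (U j (aa G j))
     else if j \<in> eedges G \<and> rho G j = 1 \<and> v = ter G j then - \<i> * rho G j * snd (U j (bb G j))
     else 0)"

definition labels :: "('v, 'e) mgraph \<Rightarrow> ('e \<times> 'v) set" where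
  "labels G = {(i, ini G i) | i. i \<in> iedges G} \<union> {(i, ter G i) | i. i \<in> iedges G} \<union>
              {(e, ini G e) | e. e \<in> eedges G \<and> rho G e = -1} \<union>
              {(e, ter G e) | e. e \<in> eedges G \<and> rho G e = 1}"

definition vertex_space :: "('v, 'e) mgraph \<Rightarrow> ('e \<times> 'v \<Rightarrow> complex) set" where
  "vertex_space G = {x. \<forall>l. l \<notin> labels G \<longrightarrow> x l = 0}"

definition linear_relation :: "('e \<times> 'v \<Rightarrow> complex) set \<Rightarrow>
    (('e \<times> 'v \<Rightarrow> complex) \<times> ('e \<times> 'v \<Rightarrow> complex)) set \<Rightarrow> bool" where
  "linear_relation F \<Lambda> \<longleftrightarrow> \<Lambda> \<subseteq> F \<times> F \<and> ((\<lambda>l. 0), (\<lambda>l. 0)) \<in> \<Lambda> \<and>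
     (\<forall>p\<in>\<Lambda>. \<forall>q\<in>\<Lambda>. ((\<lambda>l. fst p l + fst q l), (\<lambda>l. snd p l + snd q l)) \<in> \<Lambda>) \<and>
     (\<forall>c::complex. \<forall>p\<in>\<Lambda>. ((\<lambda>l. c * fst p l), (\<lambda>l. c * snd p l)) \<in> \<Lambda>)"

text \<open>Graph of the operator D^{Lambda_W} on the Hilbert space of edgewise
L^2 functions (elements are represented by functions, equality edgewise a.e.):
(Phi, Psi) is in the graph iff Phi has a representative U in H~^1 (with weak
derivative Up) satisfying the vertex condition (W Gamma^1 U, W Gamma^2 U) in Lambda,
and Psi = D^max U a.e. on every edge.\<close>
definition D_graph :: "('v, 'e) mgraph \<Rightarrow> real \<Rightarrow>
    (('e \<times> 'v \<Rightarrow> complex) \<times> ('e \<times> 'v \<Rightarrow> complex)) set \<Rightarrow>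
    ('e \<Rightarrow> real \<Rightarrow> complex \<times> complex) \<Rightarrow> ('e \<Rightarrow> real \<Rightarrow> complex \<times> complex) \<Rightarrow> bool" where
  "D_graph G m \<Lambda> Phi Psi \<longleftrightarrow>
     (\<exists>U Up. (\<forall>j\<in>edges G.
                H1_rep (edge_set G j) (U j) (Up j) \<and>
                (AE x in lebesgue_on (edge_set G j). Phi j x = U j x) \<and>
                (AE x in lebesgue_on (edge_set G j). Psi j x = dirac m (U j x) (Up j x))) \<and>
             (WGamma1 G U, WGamma2 G U) \<in> \<Lambda>)"

definition sigma3 :: "complex \<times> complex \<Rightarrow> complex \<times> complex" where
  "sigma3 z = (fst z, - snd z)"

definition P_op :: "'e set \<Rightarrow> ('e \<Rightarrow> real \<Rightarrow> complex \<times> complex) \<Rightarrow> ('e \<Rightarrow> real \<Rightarrow> complex \<times> complex)" where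
  "P_op Jm Phi = (\<lambda>j x. if j \<in> Jm then sigma3 (Phi j (- x)) else Phi j x)"

end

theory Submission
  imports Defs
begin

lemma uminus_leb_meas: "(uminus :: real \<Rightarrow> real) \<in> lebesgue \<rightarrow>\<^sub>M lebesgue"
  using lebesgue_affine_measurable[where c="\<lambda>_::real. -1" and t=0] by simp

lemma emeasure_leb_uminus: "emeasure lebesgue (uminus ` (A::real set)) = emeasure lebesgue A"
  using emeasure_lebesgue_affine[of "-1" 0 A] by simp

lemma distr_leb_on:
  fixes S :: "real set"
  assumes S: "S \<in> sets lebesgue" and T: "uminus ` S \<in> sets lebesgue"
  shows "uminus \<in> measurable (lebesgue_on (uminus ` S)) (lebesgue_on S)"
    and "distr (lebesgue_on (uminus ` S)) (lebesgue_on S) uminus = lebesgue_on S"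
proof -
  show m: "uminus \<in> measurable (lebesgue_on (uminus ` S)) (lebesgue_on S)"
    by (rule measurable_restrict_space3[OF uminus_leb_meas]) auto
  show "distr (lebesgue_on (uminus ` S)) (lebesgue_on S) uminus = lebesgue_on S"
  proof (rule measure_eqI)
    show "sets (distr (lebesgue_on (uminus ` S)) (lebesgue_on S) uminus) = sets (lebesgue_on S)" by simp
    fix A assume "A \<in> sets (distr (lebesgue_on (uminus ` S)) (lebesgue_on S) uminus)"
    then have A: "A \<in> sets (lebesgue_on S)" by simp
    then have AS: "A \<subseteq> S" and AL: "A \<in> sets lebesgue"
      using sets_restrict_space_iff[of S lebesgue] S by auto
    have eq: "uminus -` A \<inter> space (lebesgue_on (uminus ` S)) = uminus ` A"
      using AS by (force simp: image_iff)
    have AL2: "uminus ` A \<in> sets lebesgue"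
    proof -
      have "uminus -` A \<inter> space lebesgue \<in> sets lebesgue" using uminus_leb_meas AL measurable_sets by blast
      moreover have "uminus -` A = uminus ` A" by (force simp: image_iff)
      ultimately show ?thesis by simp
    qed
    have "emeasure (distr (lebesgue_on (uminus ` S)) (lebesgue_on S) uminus) A
        = emeasure (lebesgue_on (uminus ` S)) (uminus ` A)"
      using emeasure_distr[OF m A] eq by simp
    also have "\<dots> = emeasure lebesgue (uminus ` A)"
      using emeasure_restrict_space[of "uminus ` S" lebesgue "uminus ` A"] T AS by auto
    also have "\<dots> = emeasure lebesgue A" by (rule emeasure_leb_uminus)
    also have "\<dots> = emeasure (lebesgue_on S) A"
      using emeasure_restrict_space[of S lebesgue A] S AS by auto
    finally show "emeasure (distr (lebesgue_on (uminus ` S)) (lebesgue_on S) uminus) A = emeasure (lebesgue_on S) A" .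
  qed
qed


lemma refl_meas:
  fixes S :: "real set"
  assumes S: "S \<in> sets lebesgue" and T: "uminus ` S \<in> sets lebesgue"
    and f: "f \<in> borel_measurable (lebesgue_on S)"
  shows "(\<lambda>x. f (- x)) \<in> borel_measurable (lebesgue_on (uminus ` S))"
  using measurable_comp[OF distr_leb_on(1)[OF S T] f] by (simp add: o_def)

lemma refl_integrable:
  fixes S :: "real set" and f :: "real \<Rightarrow> real"
  assumes S: "S \<in> sets lebesgue" and T: "uminus ` S \<in> sets lebesgue"
    and f: "integrable (lebesgue_on S) f"
  shows "integrable (lebesgue_on (uminus ` S)) (\<lambda>x. f (- x))"
    and "integral\<^sup>L (lebesgue_on (uminus ` S)) (\<lambda>x. f (- x)) = integral\<^sup>L (lebesgue_on S) f"
proof -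
  have fm: "f \<in> borel_measurable (lebesgue_on S)" using f by auto
  have "integrable (distr (lebesgue_on (uminus ` S)) (lebesgue_on S) uminus) f"
    using f distr_leb_on(2)[OF S T] by simp
  then show "integrable (lebesgue_on (uminus ` S)) (\<lambda>x. f (- x))"
    using integrable_distr_eq[OF distr_leb_on(1)[OF S T] fm] by simp
  have "integral\<^sup>L (distr (lebesgue_on (uminus ` S)) (lebesgue_on S) uminus) f
      = integral\<^sup>L (lebesgue_on (uminus ` S)) (\<lambda>x. f (- x))"
    by (rule integral_distr[OF distr_leb_on(1)[OF S T] fm])
  then show "integral\<^sup>L (lebesgue_on (uminus ` S)) (\<lambda>x. f (- x)) = integral\<^sup>L (lebesgue_on S) f"
    using distr_leb_on(2)[OF S T] by simp
qed

lemma refl_AE: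
  fixes S :: "real set"
  assumes S: "S \<in> sets lebesgue" and T: "uminus ` S \<in> sets lebesgue"
    and P: "AE x in lebesgue_on S. P x"
  shows "AE x in lebesgue_on (uminus ` S). P (- x)"
proof -
  obtain N where N: "N \<in> null_sets (lebesgue_on S)" "{x \<in> space (lebesgue_on S). \<not> P x} \<subseteq> N"
    using P by (auto elim!: AE_E3 simp: eventually_ae_filter)
  have m: "uminus \<in> measurable (lebesgue_on (uminus ` S)) (lebesgue_on S)" by (rule distr_leb_on(1)[OF S T])
  have Ns: "N \<in> sets (lebesgue_on S)" using N by auto
  have "emeasure (lebesgue_on (uminus ` S)) (uminus -` N \<inter> space (lebesgue_on (uminus ` S)))
      = emeasure (distr (lebesgue_on (uminus ` S)) (lebesgue_on S) uminus) N"
    using emeasure_distr[OF m Ns] by simp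
  also have "\<dots> = 0" using distr_leb_on(2)[OF S T] N by auto
  finally have "uminus -` N \<inter> space (lebesgue_on (uminus ` S)) \<in> null_sets (lebesgue_on (uminus ` S))"
    using measurable_sets[OF m Ns] by auto
  moreover have "{x \<in> space (lebesgue_on (uminus ` S)). \<not> P (- x)} \<subseteq> uminus -` N \<inter> space (lebesgue_on (uminus ` S))"
    using N(2) by auto
  ultimately show ?thesis by (rule AE_I')
qed

lemma open_edge_set: "open (edge_set G j)"
  unfolding edge_set_def
  by (intro open_Collect_conj open_Collect_less continuous_intros)


definition nsig :: "complex \<times> complex \<Rightarrow> complex \<times> complex" where
  "nsig z = (- fst z, snd z)"

lemma sigma3_norm[simp]: "norm (sigma3 z) = norm z"
  by (cases z) (simp add: sigma3_def norm_Pair)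
lemma nsig_norm[simp]: "norm (nsig z) = norm z"
  by (cases z) (simp add: nsig_def norm_Pair)
lemma sigma3_bl: "bounded_linear sigma3"
  unfolding sigma3_def by (intro bounded_linear_Pair bounded_linear_fst bounded_linear_minus bounded_linear_snd)
lemma nsig_bl: "bounded_linear nsig"
  unfolding nsig_def by (intro bounded_linear_Pair bounded_linear_fst bounded_linear_minus bounded_linear_snd)
lemma sigma3_meas: "sigma3 \<in> borel_measurable borel"
  by (intro borel_measurable_continuous_onI linear_continuous_on sigma3_bl)
lemma nsig_meas: "nsig \<in> borel_measurable borel"
  by (intro borel_measurable_continuous_onI linear_continuous_on nsig_bl)

lemma L2_refl:
  fixes S :: "real set" and f :: "real \<Rightarrow> complex \<times> complex"
  assumes S: "S \<in> sets lebesgue" and T: "uminus ` S \<in> sets lebesgue"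
    and h: "h \<in> borel_measurable borel" "\<And>z. norm (h z) = norm z"
    and f: "L2_on S f"
  shows "L2_on (uminus ` S) (\<lambda>x. h (f (- x)))"
proof -
  have fm: "f \<in> borel_measurable (lebesgue_on S)" and fi: "integrable (lebesgue_on S) (\<lambda>x. (norm (f x))\<^sup>2)"
    using f by (auto simp: L2_on_def)
  have "(\<lambda>x. f (- x)) \<in> borel_measurable (lebesgue_on (uminus ` S))" by (rule refl_meas[OF S T fm])
  then have m: "(\<lambda>x. h (f (- x))) \<in> borel_measurable (lebesgue_on (uminus ` S))"
    using measurable_compose h(1) by blast
  have "integrable (lebesgue_on (uminus ` S)) (\<lambda>x. (norm (f (- x)))\<^sup>2)"
    using refl_integrable(1)[OF S T fi] by simp
  then show ?thesis using m by (simp add: L2_on_def h(2))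
qed

lemma closure_uminus_image: "closure (uminus ` (S::real set)) = uminus ` closure S"
  using closure_injective_linear_image[of uminus S] by (simp add: linear_uminus inj_def)

lemma H1_refl:
  fixes S :: "real set" and u g :: "real \<Rightarrow> complex \<times> complex"
  assumes S: "S \<in> sets lebesgue" and T: "uminus ` S \<in> sets lebesgue"
    and H: "H1_rep S u g"
  shows "H1_rep (uminus ` S) (\<lambda>x. sigma3 (u (- x))) (\<lambda>x. nsig (g (- x)))"
proof -
  have c: "continuous_on (closure S) u" and Lu: "L2_on S u" and Lg: "L2_on S g"
    and I: "\<And>x y. x \<in> S \<Longrightarrow> y \<in> S \<Longrightarrow> x \<le> y \<Longrightarrow> (g has_integral (u y - u x)) {x..y}"
    using H by (auto simp: H1_rep_def)
  have c1: "continuous_on (uminus ` closure S) (\<lambda>x. u (- x))"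
    by (rule continuous_on_compose2[OF c]) (auto intro: continuous_intros)
  have c2: "continuous_on (uminus ` closure S) (\<lambda>x. sigma3 (u (- x)))"
    using continuous_on_compose2[OF linear_continuous_on[OF sigma3_bl] c1] by auto
  have I2: "((\<lambda>t. nsig (g (- t))) has_integral (sigma3 (u (- y)) - sigma3 (u (- x)))) {x..y}"
    if "x \<in> uminus ` S" "y \<in> uminus ` S" "x \<le> y" for x y
  proof -
    have "(g has_integral (u (- x) - u (- y))) {- y..- x}" using I that by auto
    then have "((\<lambda>t. g (- t)) has_integral (u (- x) - u (- y))) {x..y}"
      using has_integral_reflect_real[where f=g and i="u (- x) - u (- y)" and a="-y" and b="-x"] by simp
    then have "((\<lambda>t. nsig (g (- t))) has_integral nsig (u (- x) - u (- y))) {x..y}"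
      by (rule has_integral_linear[OF _ nsig_bl, unfolded o_def])
    moreover have "nsig (u (- x) - u (- y)) = sigma3 (u (- y)) - sigma3 (u (- x))"
      by (simp add: nsig_def sigma3_def)
    ultimately show ?thesis by simp
  qed
  show ?thesis unfolding H1_rep_def
    using c2 L2_refl[OF S T sigma3_meas sigma3_norm Lu] L2_refl[OF S T nsig_meas nsig_norm Lg] I2
    by (simp add: closure_uminus_image)
qed


definition gcond :: "('v, 'e) mgraph \<Rightarrow> bool" where
  "gcond G \<longleftrightarrow> (\<forall>i\<in>iedges G. ini G i \<noteq> ter G i) \<and> (\<forall>e\<in>eedges G. (hi G e = \<infinity>) = (lo G e \<noteq> -\<infinity>))"

lemma wf_gcond: "mgraph_wf G \<Longrightarrow> gcond G"
  unfolding mgraph_wf_def gcond_def by force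

lemma rev_simps[simp]:
  "iedges (rev_graph G Jm) = iedges G" "eedges (rev_graph G Jm) = eedges G"
  "edges (rev_graph G Jm) = edges G"
  "ini (rev_graph G Jm) j = (if j \<in> Jm then ter G j else ini G j)"
  "ter (rev_graph G Jm) j = (if j \<in> Jm then ini G j else ter G j)"
  "lo (rev_graph G Jm) j = (if j \<in> Jm then - hi G j else lo G j)"
  "hi (rev_graph G Jm) j = (if j \<in> Jm then - lo G j else hi G j)"
  by (auto simp: rev_graph_def edges_def)

lemma gcond_rev: "gcond G \<Longrightarrow> gcond (rev_graph G Jm)"
  unfolding gcond_def by (auto simp: ereal_uminus_eq_reorder)

lemma rev_rev: "rev_graph (rev_graph G Jm) Jm = G"
  by (cases G) (simp add: rev_graph_def fun_eq_iff)

lemma edge_set_rev_out: "j \<notin> Jm \<Longrightarrow> edge_set (rev_graph G Jm) j = edge_set G j"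
  by (simp add: edge_set_def)

lemma edge_set_rev_in: "j \<in> Jm \<Longrightarrow> edge_set (rev_graph G Jm) j = uminus ` edge_set G j"
proof -
  assume j: "j \<in> Jm"
  have im: "x \<in> uminus ` A \<longleftrightarrow> - x \<in> A" for x :: real and A by force
  have 1: "- hi G j < ereal x \<longleftrightarrow> ereal (- x) < hi G j" for x
    by (simp add: ereal_uminus_less_reorder)
  have 2: "ereal x < - lo G j \<longleftrightarrow> lo G j < ereal (- x)" for x
    using ereal_less_uminus_reorder[of "ereal x" "lo G j"] by simp
  show ?thesis using j by (auto simp: edge_set_def im 1 2)
qed

lemma aa_rev: "j \<in> Jm \<Longrightarrow> aa (rev_graph G Jm) j = - bb G j"
  by (simp add: aa_def bb_def)
lemma bb_rev: "j \<in> Jm \<Longrightarrow> bb (rev_graph G Jm) j = - aa G j"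
  by (simp add: aa_def bb_def)

lemma dirac_refl: "dirac m (sigma3 u) (nsig up) = sigma3 (dirac m u up)"
  by (simp add: dirac_def sigma3_def nsig_def algebra_simps)


lemma rho_rev: "gcond G \<Longrightarrow> j \<in> eedges G \<Longrightarrow> j \<in> Jm \<Longrightarrow> rho (rev_graph G Jm) j = (if rho G j = -1 then 1 else -1)"
  unfolding gcond_def rho_def by (auto simp: ereal_uminus_eq_reorder)

lemma rho_cases: "rho G j = -1 \<or> rho G j = 1"
  by (simp add: rho_def)

lemma WG1_rev: assumes "gcond G" shows "WGamma1 (rev_graph G Jm) (P_op Jm U) = WGamma1 G U"
proof (rule ext, clarify)
  fix j v
  show "WGamma1 (rev_graph G Jm) (P_op Jm U) (j, v) = WGamma1 G U (j, v)"
  proof (cases "j \<in> Jm")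
    case False
    then show ?thesis by (simp add: WGamma1_def P_op_def aa_def bb_def rho_def)
  next
    case True
    have ne: "j \<in> iedges G \<Longrightarrow> ini G j \<noteq> ter G j" using assms by (auto simp: gcond_def)
    show ?thesis
      using True ne rho_rev[OF assms _ True] rho_cases[of G j]
      by (auto simp: WGamma1_def P_op_def aa_rev bb_rev sigma3_def)
  qed
qed

lemma WG2_rev: assumes "gcond G" shows "WGamma2 (rev_graph G Jm) (P_op Jm U) = WGamma2 G U"
proof (rule ext, clarify)
  fix j v
  show "WGamma2 (rev_graph G Jm) (P_op Jm U) (j, v) = WGamma2 G U (j, v)"
  proof (cases "j \<in> Jm")
    case False
    then show ?thesis by (simp add: WGamma2_def P_op_def aa_def bb_def rho_def)
  next
    case True
    have ne: "j \<in> iedges G \<Longrightarrow> ini G j \<noteq> ter G j" using assms by (auto simp: gcond_def)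
    show ?thesis
      using True ne rho_rev[OF assms _ True] rho_cases[of G j]
      by (auto simp: WGamma2_def P_op_def aa_rev bb_rev sigma3_def)
  qed
qed


lemma P_op_P_op: "P_op Jm (P_op Jm Phi) = Phi"
  by (simp add: P_op_def sigma3_def fun_eq_iff)

lemma sets_edge: "edge_set G j \<in> sets lebesgue"
  using open_edge_set by (metis borel_open sets_completionI_sets sets_lborel)

lemma D_rev:
  assumes g: "gcond G" and D: "D_graph G m \<Lambda> Phi Psi"
  shows "D_graph (rev_graph G Jm) m \<Lambda> (P_op Jm Phi) (P_op Jm Psi)"
proof -
  obtain U Up where U: "\<And>j. j \<in> edges G \<Longrightarrow> H1_rep (edge_set G j) (U j) (Up j) \<and>
                (AE x in lebesgue_on (edge_set G j). Phi j x = U j x) \<and>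
                (AE x in lebesgue_on (edge_set G j). Psi j x = dirac m (U j x) (Up j x))"
     and L: "(WGamma1 G U, WGamma2 G U) \<in> \<Lambda>"
    using D unfolding D_graph_def by blast
  define Up' where "Up' = (\<lambda>j x. if j \<in> Jm then nsig (Up j (- x)) else Up j x)"
  have "H1_rep (edge_set (rev_graph G Jm) j) (P_op Jm U j) (Up' j) \<and>
        (AE x in lebesgue_on (edge_set (rev_graph G Jm) j). P_op Jm Phi j x = P_op Jm U j x) \<and>
        (AE x in lebesgue_on (edge_set (rev_graph G Jm) j). P_op Jm Psi j x = dirac m (P_op Jm U j x) (Up' j x))"
    if j: "j \<in> edges G" for j
  proof (cases "j \<in> Jm")
    case False
    have ES: "edge_set (rev_graph G Jm) j = edge_set G j" using False by (rule edge_set_rev_out)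
    have PU: "P_op Jm U j = U j" "Up' j = Up j" "P_op Jm Phi j = Phi j" "P_op Jm Psi j = Psi j"
      using False by (auto simp: P_op_def Up'_def fun_eq_iff)
    show ?thesis unfolding ES PU using U[OF j] by blast
  next
    case True
    have S: "edge_set G j \<in> sets lebesgue" by (rule sets_edge)
    have T: "uminus ` edge_set G j \<in> sets lebesgue"
      using sets_edge[of "rev_graph G Jm" j] unfolding edge_set_rev_in[OF True] .
    have PU: "P_op Jm U j = (\<lambda>x. sigma3 (U j (- x)))" "Up' j = (\<lambda>x. nsig (Up j (- x)))"
      "P_op Jm Phi j = (\<lambda>x. sigma3 (Phi j (- x)))" "P_op Jm Psi j = (\<lambda>x. sigma3 (Psi j (- x)))"
      using True by (auto simp: P_op_def Up'_def fun_eq_iff)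
    have a1: "AE x in lebesgue_on (uminus ` edge_set G j). Phi j (- x) = U j (- x)"
      using refl_AE[OF S T] U[OF j] by blast
    have a2: "AE x in lebesgue_on (uminus ` edge_set G j). Psi j (- x) = dirac m (U j (- x)) (Up j (- x))"
      using refl_AE[OF S T, of "\<lambda>x. Psi j x = dirac m (U j x) (Up j x)"] U[OF j] by blast
    show ?thesis unfolding PU edge_set_rev_in[OF True]
      apply (intro conjI)
      subgoal using H1_refl[OF S T] U[OF j] by blast
      subgoal by (rule eventually_mono[OF a1]) simp
      subgoal by (rule eventually_mono[OF a2]) (simp add: dirac_refl)
      done
  qed
  moreover have "(WGamma1 (rev_graph G Jm) (P_op Jm U), WGamma2 (rev_graph G Jm) (P_op Jm U)) \<in> \<Lambda>"
    using L WG1_rev[OF g] WG2_rev[OF g] by simp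
  ultimately show ?thesis unfolding D_graph_def rev_simps by blast
qed

theorem theorem4p6:
  fixes G :: "('v, 'e) mgraph" and Jm :: "'e set" and m :: real
    and \<Lambda> :: "(('e \<times> 'v \<Rightarrow> complex) \<times> ('e \<times> 'v \<Rightarrow> complex)) set"
  assumes "mgraph_wf G"
    and "m \<ge> 0"
    and "Jm \<subseteq> edges G"
    and "linear_relation (vertex_space G) \<Lambda>"
  shows "(\<forall>Phi Psi. D_graph (rev_graph G Jm) m \<Lambda> (P_op Jm Phi) (P_op Jm Psi)
                     \<longleftrightarrow> D_graph G m \<Lambda> Phi Psi)
     \<and> (\<forall>Phi. P_op Jm (P_op Jm Phi) = Phi)
     \<and> (\<forall>Phi. \<forall>j\<in>edges G.
          (L2_on (edge_set (rev_graph G Jm) j) (P_op Jm Phi j) \<longleftrightarrow> L2_on (edge_set G j) (Phi j)) \<and>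
          integral\<^sup>L (lebesgue_on (edge_set (rev_graph G Jm) j)) (\<lambda>x. (norm (P_op Jm Phi j x))\<^sup>2)
            = integral\<^sup>L (lebesgue_on (edge_set G j)) (\<lambda>x. (norm (Phi j x))\<^sup>2))"
proof -
  have g: "gcond G" by (rule wf_gcond[OF assms(1)])
  have A: "D_graph (rev_graph G Jm) m \<Lambda> (P_op Jm Phi) (P_op Jm Psi) \<longleftrightarrow> D_graph G m \<Lambda> Phi Psi" for Phi Psi
  proof -
  show "D_graph (rev_graph G Jm) m \<Lambda> (P_op Jm Phi) (P_op Jm Psi) \<longleftrightarrow> D_graph G m \<Lambda> Phi Psi"
  proof
    assume "D_graph (rev_graph G Jm) m \<Lambda> (P_op Jm Phi) (P_op Jm Psi)"
    from D_rev[OF gcond_rev[OF g] this, of Jm] show "D_graph G m \<Lambda> Phi Psi"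
      by (simp add: rev_rev P_op_P_op)
  next
    assume "D_graph G m \<Lambda> Phi Psi"
    from D_rev[OF g this] show "D_graph (rev_graph G Jm) m \<Lambda> (P_op Jm Phi) (P_op Jm Psi)" .
  qed
  qed
  have C: "(L2_on (edge_set (rev_graph G Jm) j) (P_op Jm Phi j) \<longleftrightarrow> L2_on (edge_set G j) (Phi j)) \<and>
          integral\<^sup>L (lebesgue_on (edge_set (rev_graph G Jm) j)) (\<lambda>x. (norm (P_op Jm Phi j x))\<^sup>2)
            = integral\<^sup>L (lebesgue_on (edge_set G j)) (\<lambda>x. (norm (Phi j x))\<^sup>2)" if j: "j \<in> edges G" for Phi j
  proof (cases "j \<in> Jm")
    case False
    then show ?thesis by (simp add: edge_set_rev_out P_op_def)
  next
    case True
    define S where "S = edge_set G j"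
    have S: "S \<in> sets lebesgue" unfolding S_def by (rule sets_edge)
    have T: "uminus ` S \<in> sets lebesgue"
      using sets_edge[of "rev_graph G Jm" j] unfolding edge_set_rev_in[OF True] S_def .
    have S2: "uminus ` uminus ` S = S" by (simp add: image_image)
    have T2: "uminus ` uminus ` S \<in> sets lebesgue" using S S2 by simp
    have PU: "P_op Jm Phi j = (\<lambda>x. sigma3 (Phi j (- x)))" using True by (auto simp: P_op_def fun_eq_iff)
    have ER: "edge_set (rev_graph G Jm) j = uminus ` S" using edge_set_rev_in[OF True] S_def by simp
    have iff: "L2_on (uminus ` S) (\<lambda>x. sigma3 (Phi j (- x))) \<longleftrightarrow> L2_on S (Phi j)"
    proof
      assume "L2_on (uminus ` S) (\<lambda>x. sigma3 (Phi j (- x)))"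
      from L2_refl[OF T T2 sigma3_meas sigma3_norm this] show "L2_on S (Phi j)"
        using S2 by (simp add: sigma3_def)
    next
      assume "L2_on S (Phi j)"
      from L2_refl[OF S T sigma3_meas sigma3_norm this] show "L2_on (uminus ` S) (\<lambda>x. sigma3 (Phi j (- x)))" .
    qed
    have int: "integral\<^sup>L (lebesgue_on (uminus ` S)) (\<lambda>x. (norm (Phi j (- x)))\<^sup>2)
            = integral\<^sup>L (lebesgue_on S) (\<lambda>x. (norm (Phi j x))\<^sup>2)"
    proof (cases "integrable (lebesgue_on S) (\<lambda>x. (norm (Phi j x))\<^sup>2)")
      case True
      from refl_integrable(2)[OF S T True] show ?thesis .
    next
      case False
      have "\<not> integrable (lebesgue_on (uminus ` S)) (\<lambda>x. (norm (Phi j (- x)))\<^sup>2)"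
      proof
        assume "integrable (lebesgue_on (uminus ` S)) (\<lambda>x. (norm (Phi j (- x)))\<^sup>2)"
        from refl_integrable(1)[OF T T2 this] False S2 show False by simp
      qed
      with False show ?thesis by (simp add: not_integrable_integral_eq)
    qed
    show ?thesis unfolding PU ER using iff int by (simp add: S_def)
  qed
show ?thesis using A C P_op_P_op by blast
qed

end
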